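(* For real parameters $a,b,c,e>-1$ and $d>0$ let $$J_3(a,b,c,d,e)=\iiint\limits_{[0,1]^3}\frac{x^b(1-x)^cy^e(1-y)^az^a(1-z)^c}{(1-z+xyz)^d}\,\mathrm d x\,\mathrm d y\,\mathrm d z$$ (whenever convergent) and $K(a,b,c,d,e)=J_3(a,b,c,d+1,e)/J_3(a,b,c,d,e)$. Then, with $K_4=\frac1{\sqrt5}\log\frac{\sqrt5+1}2$, $$K(0,1/5,0,3/5,2/5)=-\frac{4(1-4K_4)}{5-24K_4}.$$ *)

theory Defs
  imports "HOL-Analysis.Analysis"
begin

text \<open>Triple integral over the open unit cube (boundary has measure zero),
  as a Lebesgue integral w.r.t. the product Lebesgue measure on real x real x real.\<close>
definition J3 :: "real \<Rightarrow> real \<Rightarrow> real \<Rightarrow> real \<Rightarrow> real \<Rightarrow> real" where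
  "J3 a b c d e =
     (LINT p : {0<..<1} \<times> {0<..<1} \<times> {0<..<1} | lborel.
        (case p of (x, y, z) \<Rightarrow>
          x powr b * (1 - x) powr c * y powr e * (1 - y) powr a * z powr a * (1 - z) powr c
          / (1 - z + x * y * z) powr d))"

definition K :: "real \<Rightarrow> real \<Rightarrow> real \<Rightarrow> real \<Rightarrow> real \<Rightarrow> real" where
  "K a b c d e = J3 a b c (d + 1) e / J3 a b c d e"

definition K4 :: real where
  "K4 = (1 / sqrt 5) * ln ((sqrt 5 + 1) / 2)"

end

theory Submission imports Defs begin



lemma ftc_ab:
  fixes F f :: "real \<Rightarrow> real"
  assumes ab: "a \<le> b" and cont: "continuous_on {a..b} F"
    and der: "\<And>x. a < x \<Longrightarrow> x < b \<Longrightarrow> (F has_real_derivative f x) (at x)"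
    and nn: "\<And>x. a < x \<Longrightarrow> x < b \<Longrightarrow> 0 \<le> f x"
  shows "(\<integral>\<^sup>+x. ennreal (f x) * indicator {a<..<b} x \<partial>lborel) = ennreal (F b - F a)"
    and "0 \<le> F b - F a"
proof -
  have "(f has_integral (F b - F a)) {a..b}"
    by (rule fundamental_theorem_of_calculus_interior[OF ab cont])
       (use der in \<open>auto simp: has_real_derivative_iff_has_vector_derivative[symmetric]\<close>)
  then have I: "(f has_integral (F b - F a)) {a<..<b}"
    using has_integral_open_interval[of f "F b - F a" a b] by simp
  show "(\<integral>\<^sup>+x. ennreal (f x) * indicator {a<..<b} x \<partial>lborel) = ennreal (F b - F a)"
    by (rule nn_integral_has_integral_lebesgue'[OF _ I]) (use nn in auto)
  show "0 \<le> F b - F a"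
    by (rule has_integral_nonneg[OF I]) (use nn in auto)
qed




definition hz :: "real \<Rightarrow> real \<Rightarrow> real" where
  "hz d t = (1 - t powr (1 - d)) / ((1 - t) * (1 - d))"

lemma aux1: "(k1::real) \<noteq> 0 \<Longrightarrow> k2 \<noteq> 0 \<Longrightarrow> - c * (k2 * Q * (- k1)) / (k1 * k2) = c * Q"
  by (simp add: field_simps)

lemma aux2: "- (c::real) * T / k - (- c * 1 / k) = c * ((1 - T) / k)"
  by (cases "k = 0") (simp_all add: field_simps)

lemma z_step:
  fixes t c d :: real
  assumes t: "0 < t" "t < 1" and d: "d \<noteq> 1" and c: "0 \<le> c"
  shows "(\<integral>\<^sup>+z. indicator {0<..<1} z * ennreal (c / (1 - z + t * z) powr d) \<partial>lborel)
     = ennreal (c * hz d t)"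
proof -
  define F where "F z = - c * (1 - z * (1 - t)) powr (1 - d) / ((1 - t) * (1 - d))" for z
  have pos: "0 < 1 - z * (1 - t)" if "z \<le> 1" for z
  proof -
    have "z * (1 - t) \<le> 1 - t" using mult_right_mono[of z 1 "1-t"] that t by simp
    then show ?thesis using t by linarith
  qed
  have cont: "continuous_on {0..1} F"
    unfolding F_def using pos t d by (intro continuous_intros) (auto, metis less_irrefl pos)
  have der: "(F has_real_derivative c / (1 - z + t * z) powr d) (at z)" if "0 < z" "z < 1" for z
  proof -
    have p: "0 < 1 - z * (1 - t)" using pos that by auto
    have "(F has_real_derivative - c * ((1 - d) * (1 - z * (1 - t)) powr (1 - d - 1) * (- (1 - t)))
              / ((1 - t) * (1 - d))) (at z)"
      unfolding F_def using p t
      by (auto intro!: derivative_eq_intros)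
    moreover have "- c * ((1 - d) * (1 - z * (1 - t)) powr (1 - d - 1) * (- (1 - t)))
              / ((1 - t) * (1 - d)) = c / (1 - z + t * z) powr d"
    proof -
      have e: "1 - z * (1 - t) = 1 - z + t * z" by (simp add: algebra_simps)
      have "(1 - z * (1 - t)) powr (1 - d - 1) = 1 / (1 - z + t * z) powr d"
        using p by (simp add: e powr_minus_divide)
      moreover have "- c * ((1 - d) * (1 - z * (1 - t)) powr (1 - d - 1) * (- (1 - t)))
              / ((1 - t) * (1 - d)) = c * (1 - z * (1 - t)) powr (1 - d - 1)"
        by (rule aux1) (use t d in auto)
      ultimately show ?thesis by simp
    qed
    ultimately show ?thesis by simp
  qed
  have nn: "0 \<le> c / (1 - z + t * z) powr d" for z using c by simp
  have "(\<integral>\<^sup>+z. ennreal (c / (1 - z + t * z) powr d) * indicator {0<..<1} z \<partial>lborel) = ennreal (F 1 - F 0)"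
    by (rule ftc_ab(1)[OF _ cont der nn]) auto
  moreover have "F 1 - F 0 = c * hz d t"
  proof -
    have "(1 - t) * (1 - d) \<noteq> 0" using t d by simp
    then have nz: "1 + d * t - (d + t) \<noteq> 0" by (simp add: algebra_simps)
    show ?thesis unfolding F_def hz_def using aux2[of c "t powr (1 - d)" "(1 - t) * (1 - d)"] by simp
  qed
  ultimately show ?thesis by (simp add: mult.commute)
qed




lemma pw1:
  fixes x u :: real assumes "0 < x" "0 < u"
  shows "(1/x) * (x powr (1/5) * (u/x) powr (2/5)) = x powr (-6/5) * u powr (2/5)"
proof -
  have "x powr (-6/5) = x powr ((1/5 - 2/5) - 1)" by simp
  also have "\<dots> = x powr (1/5) / x powr (2/5) / x powr 1" by (simp only: powr_diff)
  finally have "x powr (-6/5) = x powr (1/5) / x powr (2/5) / x" using assms by simp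
  then show ?thesis using assms by (simp add: powr_divide)
qed

lemma pw2:
  fixes u :: real assumes "0 < u"
  shows "u powr (2/5) * (- 5 * 1 powr (-1/5) - - 5 * u powr (-1/5)) = 5 * (u powr (1/5) - u powr (2/5))"
proof -
  have "u powr (2/5) * u powr (-1/5) = u powr (1/5)"
    by (simp add: powr_add[symmetric])
  then show ?thesis by (simp add: algebra_simps)
qed

lemma x_inner:
  fixes u :: real assumes u: "0 < u" "u < 1"
  shows "(\<integral>\<^sup>+x. ennreal (x powr (-6/5)) * indicator {u<..<1} x \<partial>lborel)
      = ennreal (5 * u powr (-1/5) - 5)"
proof -
  define F where "F x = - 5 * x powr (-1/5)" for x :: real
  have "(\<integral>\<^sup>+x. ennreal (x powr (-6/5)) * indicator {u<..<1} x \<partial>lborel) = ennreal (F 1 - F u)"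
  proof (rule ftc_ab(1))
    show "continuous_on {u..1} F" unfolding F_def using u by (intro continuous_intros) auto
    fix x assume x: "u < x" "x < 1"
    then have "0 < x" using u by simp
    then show "(F has_real_derivative x powr (-6/5)) (at x)"
      unfolding F_def by (auto intro!: derivative_eq_intros)
  qed (use u in auto)
  then show ?thesis by (simp add: F_def)
qed




lemma y_inner:
  fixes g :: "real \<Rightarrow> ennreal"
  assumes g[measurable]: "g \<in> borel_measurable borel" and x: "0 < x" "x < 1"
  shows "(\<integral>\<^sup>+y. indicator {0<..<1} y * (ennreal (x powr (1/5) * y powr (2/5)) * g (x*y)) \<partial>lborel)
    = (\<integral>\<^sup>+u. (if 0 < u \<and> u < x then ennreal (x powr (-6/5) * u powr (2/5)) * g u else 0) \<partial>lborel)"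
proof -
  have "(\<integral>\<^sup>+y. indicator {0<..<1} y * (ennreal (x powr (1/5) * y powr (2/5)) * g (x*y)) \<partial>lborel)
     = ennreal \<bar>1/x\<bar> * (\<integral>\<^sup>+u. indicator {0<..<1} (0 + (1/x) * u) *
          (ennreal (x powr (1/5) * (0 + (1/x) * u) powr (2/5)) * g (x*(0 + (1/x) * u))) \<partial>lborel)"
    by (rule nn_integral_real_affine) (use x in auto)
  also have "\<dots> = (\<integral>\<^sup>+u. ennreal (1/x) * (indicator {0<..<1} (0 + (1/x) * u) *
          (ennreal (x powr (1/5) * (0 + (1/x) * u) powr (2/5)) * g (x*(0 + (1/x) * u)))) \<partial>lborel)"
    using x by (subst nn_integral_cmult) auto
  also have "\<dots> = (\<integral>\<^sup>+u. (if 0 < u \<and> u < x then ennreal (x powr (-6/5) * u powr (2/5)) * g u else 0) \<partial>lborel)"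
  proof (rule nn_integral_cong)
    fix u :: real
    show "ennreal (1/x) * (indicator {0<..<1} (0 + (1/x) * u) *
          (ennreal (x powr (1/5) * (0 + (1/x) * u) powr (2/5)) * g (x*(0 + (1/x) * u))))
        = (if 0 < u \<and> u < x then ennreal (x powr (-6/5) * u powr (2/5)) * g u else 0)"
    proof (cases "0 < u \<and> u < x")
      case True
      then have i: "(1/x) * u \<in> {0<..<1}" using x by (auto simp: field_simps)
      have "ennreal (1/x) * ennreal (x powr (1/5) * (u/x) powr (2/5))
          = ennreal ((1/x) * (x powr (1/5) * (u/x) powr (2/5)))"
        using x by (subst ennreal_mult) auto
      also have "\<dots> = ennreal (x powr (-6/5) * u powr (2/5))"
        using pw1[of x u] x True by simp
      finally show ?thesis using i True x by (simp add: mult.assoc[symmetric])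
    next
      case False
      then have i: "(1/x) * u \<notin> {0<..<1}" using x by (auto simp: field_simps)
      show ?thesis using i False by auto
    qed
  qed
  finally show ?thesis .
qed




lemma pw3:
  fixes u :: real assumes "0 < u"
  shows "u powr (2/5) * (5 * u powr (-1/5) - 5) = 5 * (u powr (1/5) - u powr (2/5))"
proof -
  have "u powr (2/5) * u powr (-1/5) = u powr (1/5)"
    by (simp add: powr_add[symmetric])
  then show ?thesis by (simp add: algebra_simps)
qed

lemma xy_step:
  fixes g :: "real \<Rightarrow> ennreal"
  assumes g[measurable]: "g \<in> borel_measurable borel"
  shows "(\<integral>\<^sup>+x. indicator {0<..<1} x * (\<integral>\<^sup>+y. indicator {0<..<1} y *
            (ennreal (x powr (1/5) * y powr (2/5)) * g (x*y)) \<partial>lborel) \<partial>lborel)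
     = (\<integral>\<^sup>+u. indicator {0<..<1} u * (ennreal (5 * (u powr (1/5) - u powr (2/5))) * g u) \<partial>lborel)"
proof -
  define H where "H x u = (if 0 < u \<and> u < x then ennreal (x powr (-6/5) * u powr (2/5)) * g u else 0)"
    for x u :: real
  have Hm[measurable]: "case_prod H \<in> borel_measurable (lborel \<Otimes>\<^sub>M lborel)"
    unfolding H_def by measurable
  have Hm1[measurable]: "H x \<in> borel_measurable lborel" for x
    unfolding H_def by measurable
  have "(\<integral>\<^sup>+x. indicator {0<..<1} x * (\<integral>\<^sup>+y. indicator {0<..<1} y *
            (ennreal (x powr (1/5) * y powr (2/5)) * g (x*y)) \<partial>lborel) \<partial>lborel)
      = (\<integral>\<^sup>+x. indicator {0<..<1} x * (\<integral>\<^sup>+u. H x u \<partial>lborel) \<partial>lborel)"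
    by (rule nn_integral_cong) (auto simp: H_def y_inner[OF g] split: split_indicator)
  also have "\<dots> = (\<integral>\<^sup>+x. (\<integral>\<^sup>+u. indicator {0<..<1} x * H x u \<partial>lborel) \<partial>lborel)"
    by (rule nn_integral_cong) (simp add: nn_integral_cmult)
  also have "\<dots> = (\<integral>\<^sup>+u. (\<integral>\<^sup>+x. indicator {0<..<1} x * H x u \<partial>lborel) \<partial>lborel)"
    by (rule lborel_pair.Fubini'[symmetric]) measurable
  also have "\<dots> = (\<integral>\<^sup>+u. indicator {0<..<1} u * (ennreal (5 * (u powr (1/5) - u powr (2/5))) * g u) \<partial>lborel)"
  proof (rule nn_integral_cong)
    fix u :: real
    show "(\<integral>\<^sup>+x. indicator {0<..<1} x * H x u \<partial>lborel) =
       indicator {0<..<1} u * (ennreal (5 * (u powr (1/5) - u powr (2/5))) * g u)"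
    proof (cases "0 < u \<and> u < 1")
      case True
      have "(\<integral>\<^sup>+x. indicator {0<..<1} x * H x u \<partial>lborel)
          = (\<integral>\<^sup>+x. (ennreal (u powr (2/5)) * g u) * (ennreal (x powr (-6/5)) * indicator {u<..<1} x) \<partial>lborel)"
        using True by (intro nn_integral_cong)
          (auto simp: H_def ennreal_mult mult_ac split: split_indicator)
      also have "\<dots> = (ennreal (u powr (2/5)) * g u) * ennreal (5 * u powr (-1/5) - 5)"
        by (subst nn_integral_cmult, measurable, subst x_inner) (use True in auto)
      also have "\<dots> = ennreal (u powr (2/5) * (5 * u powr (-1/5) - 5)) * g u"
        using True powr_mono2'[of "-1/5" u 1] by (subst ennreal_mult) (auto simp: mult_ac)
      finally show ?thesis using True pw3[of u] by simp
    next
      case False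
      then have "(\<lambda>x. indicator {0<..<1} x * H x u) = (\<lambda>x. 0)"
        by (auto simp: H_def split: split_indicator)
      then show ?thesis using False by simp
    qed
  qed
  finally show ?thesis .
qed




lemma nn2:
  fixes F :: "real \<times> 'b::euclidean_space \<Rightarrow> ennreal"
  assumes Fm: "F \<in> borel_measurable borel"
  shows "(\<integral>\<^sup>+p. F p \<partial>lborel) = (\<integral>\<^sup>+x. \<integral>\<^sup>+y. F (x,y) \<partial>lborel \<partial>lborel)"
proof -
  have m: "F \<in> borel_measurable (lborel \<Otimes>\<^sub>M (lborel :: 'b measure))"
    using Fm by (simp add: lborel_prod)
  have "(\<integral>\<^sup>+p. F p \<partial>lborel) = (\<integral>\<^sup>+p. F p \<partial>(lborel \<Otimes>\<^sub>M (lborel :: 'b measure)))"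
    by (simp add: lborel_prod)
  also have "\<dots> = (\<integral>\<^sup>+x. \<integral>\<^sup>+y. F (x,y) \<partial>lborel \<partial>lborel)"
    by (rule lborel.nn_integral_fst[symmetric, OF m])
  finally show ?thesis .
qed

lemma nn3:
  fixes F :: "real \<times> real \<times> real \<Rightarrow> ennreal"
  assumes Fm[measurable]: "F \<in> borel_measurable borel"
  shows "(\<integral>\<^sup>+p. F p \<partial>lborel) = (\<integral>\<^sup>+x. \<integral>\<^sup>+y. \<integral>\<^sup>+z. F (x,y,z) \<partial>lborel \<partial>lborel \<partial>lborel)"
proof -
  have "(\<integral>\<^sup>+p. F p \<partial>lborel) = (\<integral>\<^sup>+x. \<integral>\<^sup>+yz. F (x,yz) \<partial>lborel \<partial>lborel)"
    by (rule nn2[OF Fm])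
  also have "\<dots> = (\<integral>\<^sup>+x. \<integral>\<^sup>+y. \<integral>\<^sup>+z. F (x,y,z) \<partial>lborel \<partial>lborel \<partial>lborel)"
  proof (rule nn_integral_cong)
    fix x :: real
    have "(\<lambda>yz. F (x, yz)) \<in> borel_measurable borel" by measurable
    then show "(\<integral>\<^sup>+yz. F (x,yz) \<partial>lborel) = (\<integral>\<^sup>+y. \<integral>\<^sup>+z. F (x,y,z) \<partial>lborel \<partial>lborel)"
      by (rule nn2)
  qed
  finally show ?thesis .
qed




lemma hz_meas[measurable]: "(\<lambda>u. ennreal (hz d u)) \<in> borel_measurable borel"
  unfolding hz_def by measurable

lemma J3_red:
  assumes d: "d \<noteq> 1"
  shows "J3 0 (1/5) 0 d (2/5) = enn2real (\<integral>\<^sup>+u. indicator {0<..<1} u *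
     (ennreal (5 * (u powr (1/5) - u powr (2/5))) * ennreal (hz d u)) \<partial>lborel)"
proof -
  define S :: "(real \<times> real \<times> real) set" where "S = {0<..<1} \<times> {0<..<1} \<times> {0<..<1}"
  define f :: "real \<times> real \<times> real \<Rightarrow> real" where "f p = (case p of (x, y, z) \<Rightarrow>
          x powr (1/5) * (1 - x) powr 0 * y powr (2/5) * (1 - y) powr 0 * z powr 0 * (1 - z) powr 0
          / (1 - z + x * y * z) powr d)" for p
  have "f \<in> borel_measurable (borel \<Otimes>\<^sub>M (borel \<Otimes>\<^sub>M borel))"
    unfolding f_def by measurable
  then have fm[measurable]: "f \<in> borel_measurable borel"
    by (simp add: borel_prod)
  have Sm[measurable]: "S \<in> sets borel"
    unfolding S_def by (intro borel_open open_Times) auto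
  have fnn: "0 \<le> f p" for p
    unfolding f_def by (auto split: prod.splits)
  have "J3 0 (1/5) 0 d (2/5) = integral\<^sup>L lborel (\<lambda>p. indicator S p *\<^sub>R f p)"
    unfolding J3_def set_lebesgue_integral_def S_def f_def by simp
  also have "\<dots> = enn2real (\<integral>\<^sup>+p. ennreal (indicator S p *\<^sub>R f p) \<partial>lborel)"
    by (rule integral_eq_nn_integral) (auto simp: fnn)
  also have "(\<integral>\<^sup>+p. ennreal (indicator S p *\<^sub>R f p) \<partial>lborel)
     = (\<integral>\<^sup>+x. \<integral>\<^sup>+y. \<integral>\<^sup>+z. ennreal (indicator S (x,y,z) *\<^sub>R f (x,y,z)) \<partial>lborel \<partial>lborel \<partial>lborel)"
    by (rule nn3) measurable
  also have "\<dots> = (\<integral>\<^sup>+x. indicator {0<..<1} x * (\<integral>\<^sup>+y. indicator {0<..<1} y *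
            (ennreal (x powr (1/5) * y powr (2/5)) * ennreal (hz d (x*y))) \<partial>lborel) \<partial>lborel)"
  proof (rule nn_integral_cong)
    fix x :: real
    show "(\<integral>\<^sup>+y. \<integral>\<^sup>+z. ennreal (indicator S (x,y,z) *\<^sub>R f (x,y,z)) \<partial>lborel \<partial>lborel)
      = indicator {0<..<1} x * (\<integral>\<^sup>+y. indicator {0<..<1} y *
            (ennreal (x powr (1/5) * y powr (2/5)) * ennreal (hz d (x*y))) \<partial>lborel)"
    proof (cases "0 < x \<and> x < 1")
      case False
      then have "\<And>y z. indicator S (x,y,z) = (0::real)" by (auto simp: S_def indicator_def)
      then show ?thesis using False by simp
    next
      case x: True
      show ?thesis
      proof -
        have "(\<integral>\<^sup>+y. \<integral>\<^sup>+z. ennreal (indicator S (x,y,z) *\<^sub>R f (x,y,z)) \<partial>lborel \<partial>lborel)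
          = (\<integral>\<^sup>+y. indicator {0<..<1} y *
            (ennreal (x powr (1/5) * y powr (2/5)) * ennreal (hz d (x*y))) \<partial>lborel)"
        proof (rule nn_integral_cong)
          fix y :: real
          show "(\<integral>\<^sup>+z. ennreal (indicator S (x,y,z) *\<^sub>R f (x,y,z)) \<partial>lborel)
             = indicator {0<..<1} y * (ennreal (x powr (1/5) * y powr (2/5)) * ennreal (hz d (x*y)))"
          proof (cases "0 < y \<and> y < 1")
            case False
            then have "\<And>z. indicator S (x,y,z) = (0::real)" by (auto simp: S_def indicator_def)
            then show ?thesis using False by simp
          next
            case y: True
            have "(\<integral>\<^sup>+z. ennreal (indicator S (x,y,z) *\<^sub>R f (x,y,z)) \<partial>lborel)
              = (\<integral>\<^sup>+z. indicator {0<..<1} z * ennreal (x powr (1/5) * y powr (2/5) / (1 - z + (x*y) * z) powr d) \<partial>lborel)"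
              using x y by (intro nn_integral_cong) (auto simp: S_def f_def mult.assoc split: split_indicator)
            also have "\<dots> = ennreal (x powr (1/5) * y powr (2/5) * hz d (x*y))"
              using x y d mult_strict_mono[of x 1 y 1] by (intro z_step) auto
            also have "\<dots> = ennreal (x powr (1/5) * y powr (2/5)) * ennreal (hz d (x*y))"
              by (rule ennreal_mult') simp
            finally show ?thesis using y by simp
          qed
        qed
        then show ?thesis using x by simp
      qed
    qed
  qed
  also have "\<dots> = (\<integral>\<^sup>+u. indicator {0<..<1} u *
     (ennreal (5 * (u powr (1/5) - u powr (2/5))) * ennreal (hz d u)) \<partial>lborel)"
    by (rule xy_step) measurable
  finally show ?thesis .
qed




definition phi :: real where "phi = (sqrt 5 + 1) / 2"

lemma phi_sq: "phi * phi = phi + 1"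
proof -
  have "phi * phi = (sqrt 5 * sqrt 5 + 2 * sqrt 5 + 1) / 4"
    unfolding phi_def by (simp add: algebra_simps)
  also have "\<dots> = (6 + 2 * sqrt 5) / 4" by simp
  finally show ?thesis unfolding phi_def by simp
qed

lemma phi_sq0: "phi * phi - phi - 1 = 0" using phi_sq by simp

lemma phi_sqrt: "2 * phi - 1 = sqrt 5"
  unfolding phi_def by (simp add: field_simps)

lemma phi_bounds: "1 < phi" "phi < 2"
proof -
  have "2 < sqrt 5" by (rule real_less_rsqrt) simp
  moreover have "sqrt 5 < 3" by (rule real_sqrt_less_mono[of 5 9, simplified]) 
  ultimately show "1 < phi" "phi < 2" unfolding phi_def by auto
qed

definition PN :: "real \<Rightarrow> real" where "PN s = s^2 + phi * s + 1"
definition PD :: "real \<Rightarrow> real" where "PD s = s^2 + (1 - phi) * s + 1"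
definition PP :: "real \<Rightarrow> real" where "PP s = 1 + s + s^2 + s^3 + s^4"
definition GG :: "real \<Rightarrow> real" where "GG s = (ln (PN s) - ln (PD s)) / sqrt 5"

lemma PN_pos: "0 \<le> s \<Longrightarrow> 0 < PN s"
proof -
  assume s: "0 \<le> s"
  have "0 \<le> phi * s" using phi_bounds s by simp
  moreover have "0 \<le> s^2" by simp
  ultimately show ?thesis unfolding PN_def by linarith
qed

lemma PD_pos: "0 \<le> s \<Longrightarrow> 0 < PD s"
proof -
  assume s: "0 \<le> s"
  have e: "PD s = (s - 1/2)^2 + 3/4 + (2 - phi) * s"
    unfolding PD_def by (simp add: power2_eq_square algebra_simps)
  have "0 \<le> (2 - phi) * s" using phi_bounds s by simp
  moreover have "0 \<le> (s - 1/2)^2" by simp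
  ultimately show ?thesis unfolding e by linarith
qed

lemma PND: "PN s * PD s = PP s"
proof -
  have "PN s * PD s - PP s = - (phi * phi - phi - 1) * s^2"
    unfolding PN_def PD_def PP_def by (simp add: power2_eq_square power3_eq_cube power4_eq_xxxx algebra_simps)
  then show ?thesis using phi_sq0 by simp
qed

lemma GG_deriv:
  assumes s: "0 < s"
  shows "(GG has_real_derivative (1 - s^2) / PP s) (at s)"
proof -
  have n: "0 < PN s" and d: "0 < PD s" using PN_pos PD_pos s by auto
  define Dv where "Dv = ((2 * s + phi) / PN s - (2 * s + (1 - phi)) / PD s) / sqrt 5"
  have dN: "(PN has_real_derivative 2 * s + phi) (at s)"
    unfolding PN_def by (auto intro!: derivative_eq_intros)
  have dD: "(PD has_real_derivative 2 * s + (1 - phi)) (at s)"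
    unfolding PD_def by (auto intro!: derivative_eq_intros)
  have lN: "((\<lambda>s. ln (PN s)) has_real_derivative 1 / PN s * (2 * s + phi)) (at s)"
    by (rule DERIV_chain2[OF DERIV_ln_divide[OF n] dN])
  have lD: "((\<lambda>s. ln (PD s)) has_real_derivative 1 / PD s * (2 * s + (1 - phi))) (at s)"
    by (rule DERIV_chain2[OF DERIV_ln_divide[OF d] dD])
  have "(GG has_real_derivative (1 / PN s * (2 * s + phi) - 1 / PD s * (2 * s + (1 - phi))) / sqrt 5) (at s)"
    unfolding GG_def by (intro DERIV_cdivide DERIV_diff lN lD)
  then have "(GG has_real_derivative Dv) (at s)" unfolding Dv_def by simp
  moreover have "Dv = (1 - s^2) / PP s"
  proof -
    have num: "(2 * s + phi) * PD s - (2 * s + (1 - phi)) * PN s = (2 * phi - 1) * (1 - s^2)"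
      unfolding PN_def PD_def by (simp add: power2_eq_square algebra_simps)
    have "((2 * s + phi) / PN s - (2 * s + (1 - phi)) / PD s)
        = ((2 * s + phi) * PD s - (2 * s + (1 - phi)) * PN s) / (PN s * PD s)"
      using n d by (simp add: field_simps)
    also have "\<dots> = sqrt 5 * (1 - s^2) / PP s" by (simp only: num PND phi_sqrt)
    finally show ?thesis unfolding Dv_def by simp
  qed
  ultimately show ?thesis by simp
qed

lemma GG0: "GG 0 = 0" unfolding GG_def PN_def PD_def by simp

lemma GG1: "GG 1 = 2 * K4"
proof -
  have a: "PN 1 = phi^2 * PD 1"
  proof -
    have "phi^2 * PD 1 - PN 1 = (phi * phi - phi - 1) * (2 - phi)"
      unfolding PN_def PD_def by (simp add: power2_eq_square algebra_simps)
    then show ?thesis unfolding phi_sq0 by simp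
  qed
  have "ln (PN 1) = ln (phi^2) + ln (PD 1)"
    unfolding a using PD_pos[of 1] phi_bounds by (simp add: ln_mult)
  also have "ln (phi^2) = 2 * ln phi" using phi_bounds by (simp add: ln_realpow)
  finally show ?thesis unfolding GG_def K4_def phi_def by simp
qed




lemma root_facts:
  fixes u :: real assumes u: "0 < u"
  defines "s \<equiv> root 5 u"
  shows "0 < s" "u powr (1/5) = s" "u powr (2/5) = s^2" "u powr (-3/5) = inverse (s^3)" "u = s^5"
proof -
  show s0: "0 < s" unfolding s_def using u by simp
  show e1: "u powr (1/5) = s" unfolding s_def using u root_powr_inverse[of 5 u] by simp
  have "u powr (2/5) = u powr (1/5 + 1/5)" by simp
  also have "\<dots> = s^2" unfolding powr_add e1 by (simp add: power2_eq_square)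
  finally show "u powr (2/5) = s^2" .
  have "u powr (-3/5) = inverse (u powr (1/5 + 1/5 + 1/5))" by (simp add: powr_minus[symmetric])
  also have "\<dots> = inverse (s^3)" unfolding powr_add e1 by (simp add: power3_eq_cube)
  finally show "u powr (-3/5) = inverse (s^3)" .
  show "u = s^5" unfolding s_def using u by simp
qed

lemma comp_root_deriv:
  fixes u :: real
  assumes "(\<Phi> has_real_derivative D) (at (root 5 u))" "0 < u"
  shows "((\<lambda>u. \<Phi> (root 5 u)) has_real_derivative D * inverse (5 * root 5 u ^ 4)) (at u)"
  using DERIV_chain2[OF assms(1) DERIV_real_root[of 5 u]] assms(2) by simp

definition Q1 :: "real \<Rightarrow> real" where "Q1 s = s^2/2 - s^4/4 - s + s^3/3"
definition Q2 :: "real \<Rightarrow> real" where "Q2 s = s - s^2/2"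

lemma Q1_deriv: "(Q1 has_real_derivative (s - 1) * (1 - s^2)) (at s)"
  unfolding Q1_def
  by (auto intro!: derivative_eq_intros simp: power2_eq_square power3_eq_cube algebra_simps)

lemma Q2_deriv: "(Q2 has_real_derivative 1 - s) (at s)"
  unfolding Q2_def
  by (auto intro!: derivative_eq_intros simp: power2_eq_square algebra_simps)

lemma PP_pos: "0 \<le> s \<Longrightarrow> 0 < PP s"
  unfolding PP_def by (simp add: add_pos_nonneg)

lemma PP_fact: "1 - s^5 = (1 - s) * PP s"
  unfolding PP_def by algebra

lemma id1:
  fixes s :: real assumes s: "0 < s" "s < 1"
  shows "(125/2) * ((1 - s^2) / PP s + (s - 1) * (1 - s^2)) * inverse (5 * s ^ 4)
     = 5 * (s - s^2) * ((1 - s^2) / ((1 - s^5) * (2/5)))"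
proof -
  have p: "0 < PP s" using PP_pos s by simp
  have e: "(1 - s^2) / PP s + (s - 1) * (1 - s^2) = (1 - s^2) * s^5 / PP s"
  proof -
    have h: "1 + (s - 1) * PP s = s^5" using PP_fact[of s] by (simp add: algebra_simps)
    have "(1 - s^2) / PP s + (s - 1) * (1 - s^2) = (1 - s^2) * (1 + (s - 1) * PP s) / PP s"
      using p by (simp add: field_simps)
    then show ?thesis unfolding h .
  qed
  show ?thesis unfolding e PP_fact using p s
    by (simp add: field_simps eval_nat_numeral)
qed

lemma id2:
  fixes s :: real assumes s: "0 < s" "s < 1"
  shows "(125/3) * (- ((1 - s^2) / PP s) + (1 - s)) * inverse (5 * s ^ 4)
     = 5 * (s - s^2) * ((1 - inverse (s^3)) / ((1 - s^5) * (1 - 8/5)))"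
proof -
  have p: "0 < PP s" using PP_pos s by simp
  have e: "- ((1 - s^2) / PP s) + (1 - s) = s^2 * (1 - s^3) / PP s"
  proof -
    have h: "- (1 - s^2) + (1 - s) * PP s = s^2 * (1 - s^3)"
      using PP_fact[of s] by (simp add: algebra_simps power2_eq_square power3_eq_cube eval_nat_numeral)
    have "- ((1 - s^2) / PP s) + (1 - s) = (- (1 - s^2) + (1 - s) * PP s) / PP s"
      using p by (simp add: field_simps)
    then show ?thesis unfolding h .
  qed
  show ?thesis unfolding e PP_fact using p s
    by (simp add: field_simps eval_nat_numeral)
qed




lemma GG_cont: "continuous_on {0..} GG"
proof -
  have cN: "continuous_on {0..} PN" unfolding PN_def by (intro continuous_intros)
  have cD: "continuous_on {0..} PD" unfolding PD_def by (intro continuous_intros)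
  show ?thesis unfolding GG_def
    using PN_pos PD_pos by (intro continuous_intros cN cD) (auto simp: less_le)
qed

lemma root_cont: 
  assumes "continuous_on {0..} \<Phi>"
  shows "continuous_on {0..1} (\<lambda>u. \<Phi> (root 5 u))"
  by (rule continuous_on_compose2[OF assms continuous_on_real_root[OF continuous_on_id]])
     (auto simp: real_root_ge_zero)

lemma integrand_eq:
  "indicator {0<..<1} u * (ennreal (5 * (u powr (1/5) - u powr (2/5))) * ennreal (hz d u))
   = ennreal (5 * (u powr (1/5) - u powr (2/5)) * hz d u) * indicator {0<..<1} (u::real)"
proof (cases "0 < u \<and> u < 1")
  case True
  have "u powr (2/5) \<le> u powr (1/5)"
    using True by (intro powr_mono') auto
  then show ?thesis using True by (simp add: ennreal_mult')
qed (auto)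

lemma J_35: "J3 0 (1/5) 0 (3/5) (2/5) = (125/2) * (2 * K4 - 5/12)"
proof -
  define F where "F u = (125/2) * (GG (root 5 u) + Q1 (root 5 u))" for u
  define f where "f u = 5 * (u powr (1/5) - u powr (2/5)) * hz (3/5) u" for u :: real
  have cont: "continuous_on {0..1} F"
  proof -
    have "continuous_on {0..} (\<lambda>s. (125/2) * (GG s + Q1 s))"
      unfolding Q1_def by (intro continuous_intros GG_cont) auto
    then show ?thesis unfolding F_def by (rule root_cont)
  qed
  have der: "(F has_real_derivative f u) (at u)" and nn: "0 \<le> f u" if u: "0 < u" "u < 1" for u
  proof -
    define s where "s = root 5 u"
    have s: "0 < s" "s < 1" using u unfolding s_def by auto
    have rf: "u powr (1/5) = s" "u powr (2/5) = s^2" "u = s^5"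
      using root_facts[OF u(1)] unfolding s_def by auto
    have "((\<lambda>s. (125/2) * (GG s + Q1 s)) has_real_derivative
             (125/2) * ((1 - s^2) / PP s + (s - 1) * (1 - s^2))) (at s)"
      by (intro DERIV_cmult DERIV_add GG_deriv Q1_deriv s)
    from comp_root_deriv[OF this[unfolded s_def] u(1)]
    have dd: "(F has_real_derivative (125/2) * ((1 - s^2) / PP s + (s - 1) * (1 - s^2)) * inverse (5 * s ^ 4)) (at u)"
      unfolding F_def s_def by simp
    have fe: "f u = 5 * (s - s^2) * ((1 - s^2) / ((1 - s^5) * (2/5)))"
      unfolding f_def hz_def using rf by simp
    have eq: "(125/2) * ((1 - s^2) / PP s + (s - 1) * (1 - s^2)) * inverse (5 * s ^ 4) = f u"
      unfolding fe by (rule id1[OF s])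
    show "(F has_real_derivative f u) (at u)" using dd unfolding eq .
    have "s^2 \<le> s" using s by (simp add: power2_eq_square)
    moreover have "s^2 \<le> 1" "s^5 < 1" using s by (simp_all add: power_le_one power_less_one_iff)
    ultimately show "0 \<le> f u" unfolding fe by (intro mult_nonneg_nonneg divide_nonneg_pos) auto
  qed
  have I: "(\<integral>\<^sup>+u. ennreal (f u) * indicator {0<..<1} u \<partial>lborel) = ennreal (F 1 - F 0)"
    and I0: "0 \<le> F 1 - F 0"
    using ftc_ab[of 0 1 F f, OF _ cont der nn] by auto
  have v: "F 1 - F 0 = (125/2) * (2 * K4 - 5/12)"
    unfolding F_def by (simp add: GG0 GG1 Q1_def)
  have "J3 0 (1/5) 0 (3/5) (2/5) = enn2real (\<integral>\<^sup>+u. ennreal (f u) * indicator {0<..<1} u \<partial>lborel)"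
    unfolding f_def integrand_eq[symmetric] by (rule J3_red) simp
  also have "\<dots> = F 1 - F 0" unfolding I using I0 by simp
  finally show ?thesis unfolding v .
qed




lemma J_85: "J3 0 (1/5) 0 (8/5) (2/5) = (125/3) * (1/2 - 2 * K4)"
proof -
  define F where "F u = (125/3) * (- GG (root 5 u) + Q2 (root 5 u))" for u
  define f where "f u = 5 * (u powr (1/5) - u powr (2/5)) * hz (8/5) u" for u :: real
  have cont: "continuous_on {0..1} F"
  proof -
    have "continuous_on {0..} (\<lambda>s. (125/3) * (- GG s + Q2 s))"
      unfolding Q2_def by (intro continuous_intros GG_cont) auto
    then show ?thesis unfolding F_def by (rule root_cont)
  qed
  have der: "(F has_real_derivative f u) (at u)" and nn: "0 \<le> f u" if u: "0 < u" "u < 1" for u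
  proof -
    define s where "s = root 5 u"
    have s: "0 < s" "s < 1" using u unfolding s_def by auto
    have rf: "u powr (1/5) = s" "u powr (2/5) = s^2" "u = s^5" "u powr (-3/5) = inverse (s^3)"
      using root_facts[OF u(1)] unfolding s_def by auto
    have "((\<lambda>s. (125/3) * (- GG s + Q2 s)) has_real_derivative
             (125/3) * (- ((1 - s^2) / PP s) + (1 - s))) (at s)"
      by (intro DERIV_cmult DERIV_add DERIV_minus GG_deriv Q2_deriv s)
    from comp_root_deriv[OF this[unfolded s_def] u(1)]
    have dd: "(F has_real_derivative (125/3) * (- ((1 - s^2) / PP s) + (1 - s)) * inverse (5 * s ^ 4)) (at u)"
      unfolding F_def s_def by simp
    have fe: "f u = 5 * (s - s^2) * ((1 - inverse (s^3)) / ((1 - s^5) * (1 - 8/5)))"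
      unfolding f_def hz_def using rf by simp
    have eq: "(125/3) * (- ((1 - s^2) / PP s) + (1 - s)) * inverse (5 * s ^ 4) = f u"
      unfolding fe by (rule id2[OF s])
    show "(F has_real_derivative f u) (at u)" using dd unfolding eq .
    have "s^2 \<le> s" using s by (simp add: power2_eq_square)
    moreover have "s^5 < 1" "s^3 < 1" using s by (simp_all add: power_less_one_iff)
    moreover have "1 \<le> inverse (s^3)" using s \<open>s^3 < 1\<close> by (simp add: one_le_inverse_iff)
    ultimately show "0 \<le> f u" unfolding fe
      by (intro mult_nonneg_nonneg divide_nonpos_neg) auto
  qed
  have I: "(\<integral>\<^sup>+u. ennreal (f u) * indicator {0<..<1} u \<partial>lborel) = ennreal (F 1 - F 0)"
    and I0: "0 \<le> F 1 - F 0"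
    using ftc_ab[of 0 1 F f, OF _ cont der nn] by auto
  have v: "F 1 - F 0 = (125/3) * (1/2 - 2 * K4)"
    unfolding F_def by (simp add: GG0 GG1 Q2_def)
  have "J3 0 (1/5) 0 (8/5) (2/5) = enn2real (\<integral>\<^sup>+u. ennreal (f u) * indicator {0<..<1} u \<partial>lborel)"
    unfolding f_def integrand_eq[symmetric] by (rule J3_red) simp
  also have "\<dots> = F 1 - F 0" unfolding I using I0 by simp
  finally show ?thesis unfolding v .
qed

theorem mainTheorem5:
  shows "K 0 (1/5) 0 (3/5) (2/5) = - (4 * (1 - 4 * K4)) / (5 - 24 * K4)"
proof -
  have "K 0 (1/5) 0 (3/5) (2/5) = J3 0 (1/5) 0 (8/5) (2/5) / J3 0 (1/5) 0 (3/5) (2/5)"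
    unfolding K_def by simp
  also have "\<dots> = ((125/3) * (1/2 - 2 * K4)) / ((125/2) * (2 * K4 - 5/12))"
    unfolding J_85 J_35 ..
  also have "\<dots> = - (4 * (1 - 4 * K4)) / (5 - 24 * K4)"
  proof (cases "5 - 24 * K4 = 0")
    case True
    then have "2 * K4 - 5/12 = 0" by simp
    then show ?thesis using True by simp
  next
    case False
    then have "2 * K4 - 5/12 \<noteq> 0" by simp
    then show ?thesis using False by (simp add: field_simps)
  qed
  finally show ?thesis .
qed


end
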